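(* Let $g_1,\dots,g_r\in\mathbb R[X_1,\dots,X_n]$ and $r_0>0$ with $r_0^2-\|\mathbf X\|_2^2\in\mathcal Q_{\ell_0}(\mathbf g)$. Then for all $t\in\mathbb N$ and $\ell\ge 2t-2+\ell_0$, every $L\in\mathcal L^{(1)}_\ell(\mathbf g)$ satisfies $$\|L^{[2t]}\|_2\le\sqrt{\binom{n+t}{t}}\ \sum_{k=0}^t r_0^{2k}.$$
   Context: $\Sigma^2$ sums of squares; $\mathcal Q_\ell(\mathbf g)=\{s_0+\sum_is_ig_i: s_j\in\Sigma^2,\deg s_0\le\ell,\deg(s_ig_i)\le\ell\}$; $\|\mathbf X\|_2^2=\sum X_i^2$. $\mathcal L^{(1)}_\ell(\mathbf g)=\{L$ linear functional on $\mathbb R[\mathbf X]_\ell$ (polynomials of degree $\le\ell$) with $L(q)\ge0$ for all $q\in\mathcal Q_\ell(\mathbf g)$ and $L(1)=1\}$. $L^{[2t]}$ is the restriction of $L$ to $\mathbb R[\mathbf X]_{2t}$, identified with the vector $(L(\mathbf X^\alpha))_{|\alpha|\le2t}$, and $\|\cdot\|_2$ is its Euclidean norm. (The paper writes $r$ for $r_0$.) *)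

theory Defs
  imports Complex_Main "HOL-Library.Poly_Mapping"
begin

text \<open>Real polynomials: finitely supported maps from exponent vectors
  (finitely supported nat \<Rightarrow> nat) to coefficients; multiplication is convolution.\<close>

type_synonym monom = "nat \<Rightarrow>\<^sub>0 nat"
type_synonym mpoly = "monom \<Rightarrow>\<^sub>0 real"

definition mdeg :: "monom \<Rightarrow> nat" where
  "mdeg \<alpha> = (\<Sum>i\<in>Poly_Mapping.keys \<alpha>. Poly_Mapping.lookup \<alpha> i)"

definition tdeg :: "mpoly \<Rightarrow> nat" where
  "tdeg p = Max (insert 0 (mdeg ` Poly_Mapping.keys p))"

text \<open>Monomials in the variables X_0..X_{n-1} (i.e. X_1..X_n) of degree at most d.\<close>
definition mons :: "nat \<Rightarrow> nat \<Rightarrow> monom set" where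
  "mons n d = {\<alpha>. Poly_Mapping.keys \<alpha> \<subseteq> {..<n} \<and> mdeg \<alpha> \<le> d}"

definition in_vars :: "nat \<Rightarrow> mpoly \<Rightarrow> bool" where
  "in_vars n p \<longleftrightarrow> (\<forall>\<alpha>\<in>Poly_Mapping.keys p. Poly_Mapping.keys \<alpha> \<subseteq> {..<n})"

definition const :: "real \<Rightarrow> mpoly" where
  "const c = Poly_Mapping.single 0 c"

definition var :: "nat \<Rightarrow> mpoly" where
  "var i = Poly_Mapping.single (Poly_Mapping.single i 1) 1"

definition sq_norm_poly :: "nat \<Rightarrow> mpoly" where
  "sq_norm_poly n = (\<Sum>i<n. var i * var i)"

definition SOS :: "nat \<Rightarrow> mpoly set" where
  "SOS n = {s. \<exists>qs. (\<forall>q\<in>set qs. in_vars n q) \<and> s = sum_list (map (\<lambda>q. q * q) qs)}"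

definition Qmod :: "nat \<Rightarrow> nat \<Rightarrow> (nat \<Rightarrow> mpoly) \<Rightarrow> nat \<Rightarrow> mpoly set" where
  "Qmod n r g l = {p. \<exists>s0 s. s0 \<in> SOS n \<and> tdeg s0 \<le> l \<and>
      (\<forall>i\<in>{1..r}. s i \<in> SOS n \<and> tdeg (s i * g i) \<le> l) \<and>
      p = s0 + (\<Sum>i=1..r. s i * g i)}"

text \<open>A linear functional on R[X]_l, given by its values on the monomial basis
  (values outside the basis mons n l are 0).\<close>
definition apply_lf :: "(monom \<Rightarrow> real) \<Rightarrow> mpoly \<Rightarrow> real" where
  "apply_lf L p = (\<Sum>\<alpha>\<in>Poly_Mapping.keys p. Poly_Mapping.lookup p \<alpha> * L \<alpha>)"

definition Lset1 :: "nat \<Rightarrow> nat \<Rightarrow> (nat \<Rightarrow> mpoly) \<Rightarrow> nat \<Rightarrow> (monom \<Rightarrow> real) set" where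
  "Lset1 n r g l = {L. (\<forall>\<alpha>. \<alpha> \<notin> mons n l \<longrightarrow> L \<alpha> = 0) \<and>
      (\<forall>q\<in>Qmod n r g l. apply_lf L q \<ge> 0) \<and> apply_lf L 1 = 1}"

definition trunc_norm :: "nat \<Rightarrow> nat \<Rightarrow> (monom \<Rightarrow> real) \<Rightarrow> real" where
  "trunc_norm n d L = sqrt (\<Sum>\<alpha>\<in>mons n d. (L \<alpha>)\<^sup>2)"

end

theory Submission
  imports Defs "HOL-Library.FuncSet"
begin

lemma pm_expand: "(p::mpoly) = (\<Sum>a\<in>Poly_Mapping.keys p. Poly_Mapping.single a (Poly_Mapping.lookup p a))"
proof (rule poly_mapping_eqI)
  fix k
  have "Poly_Mapping.lookup (\<Sum>a\<in>Poly_Mapping.keys p. Poly_Mapping.single a (Poly_Mapping.lookup p a)) k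
     = (\<Sum>a\<in>Poly_Mapping.keys p. (if a = k then Poly_Mapping.lookup p a else 0))"
    by (simp add: lookup_sum lookup_single when_def)
  also have "\<dots> = Poly_Mapping.lookup p k"
    by (simp add: sum.delta in_keys_iff)
  finally show "Poly_Mapping.lookup p k = Poly_Mapping.lookup (\<Sum>a\<in>Poly_Mapping.keys p. Poly_Mapping.single a (Poly_Mapping.lookup p a)) k" by simp
qed

lemma lookup_mult_fin: "Poly_Mapping.lookup ((p::mpoly) * q) m =
  (\<Sum>a\<in>Poly_Mapping.keys p. \<Sum>b\<in>Poly_Mapping.keys q. (if a + b = m then Poly_Mapping.lookup p a * Poly_Mapping.lookup q b else 0))"
proof -
  have "p * q = (\<Sum>a\<in>Poly_Mapping.keys p. Poly_Mapping.single a (Poly_Mapping.lookup p a)) *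
     (\<Sum>b\<in>Poly_Mapping.keys q. Poly_Mapping.single b (Poly_Mapping.lookup q b))"
    using pm_expand[of p] pm_expand[of q] by simp
  also have "\<dots> = (\<Sum>a\<in>Poly_Mapping.keys p. \<Sum>b\<in>Poly_Mapping.keys q. Poly_Mapping.single (a+b) (Poly_Mapping.lookup p a * Poly_Mapping.lookup q b))"
    by (simp add: sum_product mult_single)
  finally show ?thesis by (simp add: lookup_sum lookup_single when_def)
qed

definition good :: "nat \<Rightarrow> mpoly \<Rightarrow> bool" where
  "good n p \<longleftrightarrow> (\<forall>m. Poly_Mapping.lookup p m \<ge> 0 \<and> (Poly_Mapping.lookup p m \<noteq> 0 \<longrightarrow> (\<exists>\<gamma>. Poly_Mapping.keys \<gamma> \<subseteq> {..<n} \<and> m = \<gamma> + \<gamma>)))"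

lemma good_mult: assumes "good n p" "good n q" shows "good n (p * q)"
  unfolding good_def
proof (intro allI conjI impI)
  fix m
  show "Poly_Mapping.lookup (p * q) m \<ge> 0" unfolding lookup_mult_fin
    using assms by (auto simp: good_def intro!: sum_nonneg)
  assume "Poly_Mapping.lookup (p * q) m \<noteq> 0"
  then obtain a where a: "a \<in> Poly_Mapping.keys p" and s:
      "(\<Sum>b\<in>Poly_Mapping.keys q. (if a + b = m then Poly_Mapping.lookup p a * Poly_Mapping.lookup q b else 0)) \<noteq> 0"
    unfolding lookup_mult_fin by (rule sum.not_neutral_contains_not_neutral)
  obtain b where b: "b \<in> Poly_Mapping.keys q" and
      "(if a + b = m then Poly_Mapping.lookup p a * Poly_Mapping.lookup q b else 0) \<noteq> 0"
    using s by (rule sum.not_neutral_contains_not_neutral)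
  then have ab: "a \<in> Poly_Mapping.keys p" "b \<in> Poly_Mapping.keys q" "a + b = m"
    using a by (auto split: if_splits)
  then obtain \<gamma> \<delta> where "Poly_Mapping.keys \<gamma> \<subseteq> {..<n}" "a = \<gamma> + \<gamma>" "Poly_Mapping.keys \<delta> \<subseteq> {..<n}" "b = \<delta> + \<delta>"
    using assms unfolding good_def in_keys_iff by blast
  then show "\<exists>\<gamma>. Poly_Mapping.keys \<gamma> \<subseteq> {..<n} \<and> m = \<gamma> + \<gamma>"
    using ab(3) keys_add[of \<gamma> \<delta>] by (intro exI[of _ "\<gamma>+\<delta>"]) (auto simp: ac_simps)
qed

lemma good_add: assumes "good n p" "good n q" shows "good n (p + q)"
  using assms unfolding good_def lookup_add by (metis add_nonneg_nonneg add.right_neutral add.left_neutral)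

lemma good_sum: "(\<And>i. i \<in> A \<Longrightarrow> good n (f i)) \<Longrightarrow> good n (sum f A)"
proof (induction A rule: infinite_finite_induct)
  case (insert x F)
  then show ?case by (simp add: good_add)
qed (auto simp: good_def)


abbreviation lk :: "mpoly \<Rightarrow> monom \<Rightarrow> real" where "lk \<equiv> Poly_Mapping.lookup"
abbreviation ks :: "mpoly \<Rightarrow> monom set" where "ks \<equiv> Poly_Mapping.keys"

lemma mdeg_superset: "finite S \<Longrightarrow> Poly_Mapping.keys \<alpha> \<subseteq> S \<Longrightarrow> mdeg \<alpha> = (\<Sum>i\<in>S. Poly_Mapping.lookup \<alpha> i)"
  unfolding mdeg_def by (rule sum.mono_neutral_left) (auto simp: in_keys_iff)

lemma mdeg_add: "mdeg (\<alpha> + \<beta>) = mdeg \<alpha> + mdeg \<beta>"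
proof -
  let ?S = "Poly_Mapping.keys \<alpha> \<union> Poly_Mapping.keys \<beta>"
  have "mdeg (\<alpha> + \<beta>) = (\<Sum>i\<in>?S. Poly_Mapping.lookup (\<alpha>+\<beta>) i)"
    using keys_add[of \<alpha> \<beta>] by (intro mdeg_superset) auto
  also have "\<dots> = (\<Sum>i\<in>?S. Poly_Mapping.lookup \<alpha> i) + (\<Sum>i\<in>?S. Poly_Mapping.lookup \<beta> i)"
    by (simp add: lookup_add sum.distrib)
  also have "\<dots> = mdeg \<alpha> + mdeg \<beta>"
    by (subst (1 2) mdeg_superset[of ?S]) auto
  finally show ?thesis .
qed

lemma mdeg_zero[simp]: "mdeg 0 = 0" by (simp add: mdeg_def)

lemma mdeg_single[simp]: "mdeg (Poly_Mapping.single i k) = k"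
  by (simp add: mdeg_def)

lemma lookup_le_mdeg: "Poly_Mapping.lookup \<alpha> i \<le> mdeg \<alpha>"
proof (cases "i \<in> Poly_Mapping.keys \<alpha>")
  case True then show ?thesis unfolding mdeg_def by (intro member_le_sum) auto
qed (simp add: in_keys_iff)

lemma mdeg_0_iff: "mdeg \<alpha> = 0 \<longleftrightarrow> \<alpha> = 0"
  using lookup_le_mdeg[of \<alpha>] by (auto intro!: poly_mapping_eqI)

lemma tdeg_le_iff: "tdeg p \<le> d \<longleftrightarrow> (\<forall>m\<in>Poly_Mapping.keys p. mdeg m \<le> d)"
  unfolding tdeg_def by (subst Max_le_iff) auto

lemma in_keys_tdeg: "m \<in> Poly_Mapping.keys p \<Longrightarrow> mdeg m \<le> tdeg p"
  using tdeg_le_iff[of p "tdeg p"] by auto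

lemma tdeg_add: "tdeg (p + q) \<le> max (tdeg p) (tdeg q)"
  unfolding tdeg_le_iff using keys_add[of p q] in_keys_tdeg[of _ p] in_keys_tdeg[of _ q] by fastforce

lemma tdeg_diff: "tdeg (p - q) \<le> max (tdeg p) (tdeg q)"
  unfolding tdeg_le_iff using keys_diff[of p q] in_keys_tdeg[of _ p] in_keys_tdeg[of _ q] by fastforce

lemma tdeg_mult: "tdeg (p * q) \<le> tdeg p + tdeg q"
  unfolding tdeg_le_iff using keys_mult[of p q] in_keys_tdeg[of _ p] in_keys_tdeg[of _ q]
  by (fastforce simp: mdeg_add intro: add_mono)

lemma tdeg_sum: "(\<And>i. i \<in> A \<Longrightarrow> tdeg (f i) \<le> d) \<Longrightarrow> tdeg (sum f A) \<le> d"
proof (induction A rule: infinite_finite_induct)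
  case (insert x F)
  have "tdeg (f x) \<le> d" "tdeg (sum f F) \<le> d" using insert by auto
  then show ?case using tdeg_add[of "f x" "sum f F"] insert(1,2) by simp
qed (auto simp: tdeg_def)

lemma tdeg_single: "tdeg (Poly_Mapping.single m c) \<le> mdeg m"
  unfolding tdeg_le_iff by auto

lemma tdeg_zero[simp]: "tdeg 0 = 0" by (simp add: tdeg_def)

lemma tdeg_power: "tdeg (p ^ k) \<le> k * tdeg p"
proof (induction k)
  case 0
  then show ?case by (simp add: tdeg_def)
next
  case (Suc k)
  then show ?case using tdeg_mult[of p "p^k"] by simp
qed

lemma apply_lf_superset: "finite S \<Longrightarrow> Poly_Mapping.keys p \<subseteq> S \<Longrightarrow>
   apply_lf L p = (\<Sum>a\<in>S. Poly_Mapping.lookup p a * L a)"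
  unfolding apply_lf_def by (rule sum.mono_neutral_left) (auto simp: in_keys_iff)

lemma apply_lf_add: "apply_lf L (p + q) = apply_lf L p + apply_lf L q"
proof -
  let ?S = "Poly_Mapping.keys p \<union> Poly_Mapping.keys q"
  have "apply_lf L (p + q) = (\<Sum>a\<in>?S. Poly_Mapping.lookup (p+q) a * L a)"
    using keys_add[of p q] by (intro apply_lf_superset) auto
  also have "\<dots> = (\<Sum>a\<in>?S. Poly_Mapping.lookup p a * L a) + (\<Sum>a\<in>?S. Poly_Mapping.lookup q a * L a)"
    by (simp add: lookup_add sum.distrib algebra_simps)
  also have "\<dots> = apply_lf L p + apply_lf L q"
    by (subst (1 2) apply_lf_superset[of ?S]) auto
  finally show ?thesis .
qed

lemma apply_lf_diff: "apply_lf L (p - q) = apply_lf L p - apply_lf L q"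
  using apply_lf_add[of L "p - q" q] by simp

lemma apply_lf_sum: "apply_lf L (sum f A) = (\<Sum>i\<in>A. apply_lf L (f i))"
proof (induction A rule: infinite_finite_induct)
  case (insert x F)
  then show ?case by (simp add: apply_lf_add)
qed (auto simp: apply_lf_def)

lemma apply_lf_single: "apply_lf L (Poly_Mapping.single a c) = c * L a"
  by (simp add: apply_lf_def)

lemma lookup_mult_const: "Poly_Mapping.lookup (p * const c) m = c * Poly_Mapping.lookup p m"
proof (cases "c = 0")
  case True then show ?thesis by (simp add: const_def)
next
  case False
  then show ?thesis unfolding lookup_mult_fin const_def
    by (simp add: sum.delta in_keys_iff if_distrib[of "\<lambda>x. x * c"] cong: if_cong)
qed

lemma apply_lf_mult_const: "apply_lf L (p * const c) = c * apply_lf L p"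
proof -
  have "apply_lf L (p * const c) = (\<Sum>a\<in>Poly_Mapping.keys p. Poly_Mapping.lookup (p * const c) a * L a)"
    by (rule apply_lf_superset) (auto simp: in_keys_iff lookup_mult_const)
  also have "\<dots> = (\<Sum>a\<in>Poly_Mapping.keys p. c * (Poly_Mapping.lookup p a * L a))"
    by (simp add: lookup_mult_const mult.assoc)
  finally show ?thesis by (simp add: apply_lf_def sum_distrib_left)
qed


lemma in_vars_add: "in_vars n p \<Longrightarrow> in_vars n q \<Longrightarrow> in_vars n (p + q)"
  unfolding in_vars_def using keys_add[of p q] by blast

lemma in_vars_mult: "in_vars n p \<Longrightarrow> in_vars n q \<Longrightarrow> in_vars n (p * q)"
  unfolding in_vars_def
proof
  fix m assume p: "\<forall>\<alpha>\<in>ks p. Poly_Mapping.keys \<alpha> \<subseteq> {..<n}" and q: "\<forall>\<alpha>\<in>ks q. Poly_Mapping.keys \<alpha> \<subseteq> {..<n}"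
    and m: "m \<in> ks (p * q)"
  then obtain a b where "a \<in> ks p" "b \<in> ks q" "m = a + b" using keys_mult[of p q] by blast
  then show "Poly_Mapping.keys m \<subseteq> {..<n}" using p q keys_add[of a b] by blast
qed

lemma in_vars_single: "Poly_Mapping.keys \<alpha> \<subseteq> {..<n} \<Longrightarrow> in_vars n (Poly_Mapping.single \<alpha> c)"
  unfolding in_vars_def by auto

lemma SOS_zero: "0 \<in> SOS n"
  unfolding SOS_def by (auto intro!: exI[of _ "[]"])

lemma SOS_add: "s \<in> SOS n \<Longrightarrow> s' \<in> SOS n \<Longrightarrow> s + s' \<in> SOS n"
  unfolding SOS_def
proof clarify
  fix qs qs' assume "\<forall>q\<in>set qs. in_vars n q" "\<forall>q\<in>set qs'. in_vars n q"
  then show "\<exists>qsa. (\<forall>q\<in>set qsa. in_vars n q) \<and>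
     sum_list (map (\<lambda>q. q * q) qs) + sum_list (map (\<lambda>q. q * q) qs') = sum_list (map (\<lambda>q. q * q) qsa)"
    by (intro exI[of _ "qs @ qs'"]) auto
qed

lemma SOS_sq: "in_vars n q \<Longrightarrow> q * q \<in> SOS n"
  unfolding SOS_def by (intro CollectI exI[of _ "[q]"]) auto

lemma SOS_sum: "(\<And>i. i \<in> A \<Longrightarrow> f i \<in> SOS n) \<Longrightarrow> sum f A \<in> SOS n"
proof (induction A rule: infinite_finite_induct)
  case (insert x F)
  then show ?case by (simp add: SOS_add)
qed (auto simp: SOS_zero)

lemma SOS_mult_sq: assumes "s \<in> SOS n" "in_vars n p" shows "p * p * s \<in> SOS n"
proof -
  obtain qs where qs: "\<forall>q\<in>set qs. in_vars n q" "s = sum_list (map (\<lambda>q. q * q) qs)"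
    using assms(1) unfolding SOS_def by blast
  have "p * p * sum_list (map (\<lambda>q. q * q) qs) = sum_list (map (\<lambda>q. q * q) (map (\<lambda>q. p * q) qs))"
    by (induction qs) (auto simp: algebra_simps)
  moreover have "\<forall>q\<in>set (map (\<lambda>q. p * q) qs). in_vars n q" using qs(1) assms(2) in_vars_mult by auto
  ultimately show ?thesis unfolding SOS_def qs(2) by blast
qed

lemma SOS_mult: assumes "s \<in> SOS n" "s' \<in> SOS n" shows "s * s' \<in> SOS n"
proof -
  obtain qs where qs: "\<forall>q\<in>set qs. in_vars n q" "s = sum_list (map (\<lambda>q. q * q) qs)"
    using assms(1) unfolding SOS_def by blast
  have "sum_list (map (\<lambda>q. q * q) qs) * s' \<in> SOS n" using qs(1)
  proof (induction qs)
    case Nil then show ?case by (simp add: SOS_zero)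
  next
    case (Cons a qs)
    then show ?case using SOS_mult_sq[OF assms(2), of a] SOS_add by (simp add: distrib_right)
  qed
  then show ?thesis using qs(2) by simp
qed

lemma good_SOS: assumes "good n p" shows "p \<in> SOS n"
proof -
  have "(\<Sum>a\<in>ks p. Poly_Mapping.single a (lk p a)) \<in> SOS n"
  proof (rule SOS_sum)
    fix a assume a: "a \<in> ks p"
    then obtain \<gamma> where g: "Poly_Mapping.keys \<gamma> \<subseteq> {..<n}" "a = \<gamma> + \<gamma>" and nn: "lk p a \<ge> 0"
      using assms unfolding good_def in_keys_iff by blast
    have "Poly_Mapping.single a (lk p a) = Poly_Mapping.single \<gamma> (sqrt (lk p a)) * Poly_Mapping.single \<gamma> (sqrt (lk p a))"
      using nn g(2) by (simp add: mult_single)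
    then show "Poly_Mapping.single a (lk p a) \<in> SOS n" using SOS_sq in_vars_single[OF g(1)] by metis
  qed
  then show ?thesis using pm_expand[of p] by simp
qed

lemma SOS_Qmod: assumes "s \<in> SOS n" "tdeg s \<le> l" shows "s \<in> Qmod n r g l"
  unfolding Qmod_def using assms SOS_zero
  by (intro CollectI exI[of _ s] exI[of _ "\<lambda>_. 0"]) auto

lemma Lset_nonneg: "L \<in> Lset1 n r g l \<Longrightarrow> s \<in> SOS n \<Longrightarrow> tdeg s \<le> l \<Longrightarrow> apply_lf L s \<ge> 0"
  unfolding Lset1_def using SOS_Qmod by blast


lemma good_single: "Poly_Mapping.keys \<gamma> \<subseteq> {..<n} \<Longrightarrow> c \<ge> 0 \<Longrightarrow> good n (Poly_Mapping.single (\<gamma> + \<gamma>) c)"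
  unfolding good_def by (auto simp: lookup_single when_def)

lemma var_sq: "var i * var i = Poly_Mapping.single (Poly_Mapping.single i 1 + Poly_Mapping.single i 1) 1"
  by (simp add: var_def mult_single)

lemma good_sq_norm: "good n (sq_norm_poly n)"
  unfolding sq_norm_poly_def var_sq by (intro good_sum good_single) auto

lemma good_one: "good n 1"
  using good_single[of 0 n 1] by simp

lemma good_pow: "good n (sq_norm_poly n ^ k)"
  by (induction k) (auto simp: good_one good_sq_norm good_mult)

lemma tdeg_sq_norm: "tdeg (sq_norm_poly n) \<le> 2"
  unfolding sq_norm_poly_def var_sq
  by (intro tdeg_sum order_trans[OF tdeg_single]) (simp add: mdeg_add)

lemma tdeg_pow: "tdeg (sq_norm_poly n ^ k) \<le> 2 * k"
  using tdeg_power[of "sq_norm_poly n" k] tdeg_sq_norm[of n]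
  by (metis mult.commute mult_le_mono2 order_trans)

lemma lookup_single_mult: "lk (Poly_Mapping.single a c * p) (a + x) = c * lk p x"
proof (cases "c = 0")
  case False
  then show ?thesis unfolding lookup_mult_fin
    by (simp add: sum.delta in_keys_iff cong: if_cong)
qed simp

lemma monom_split: assumes "i \<in> Poly_Mapping.keys (\<beta>::monom)"
  shows "\<beta> = Poly_Mapping.single i 1 + (\<beta> - Poly_Mapping.single i 1)"
    "Poly_Mapping.keys (\<beta> - Poly_Mapping.single i 1) \<subseteq> Poly_Mapping.keys \<beta>"
  using assms by (auto intro!: poly_mapping_eqI simp: lookup_add lookup_minus lookup_single when_def in_keys_iff)

lemma pow_lookup_ge1: "mdeg \<beta> = k \<Longrightarrow> Poly_Mapping.keys \<beta> \<subseteq> {..<n} \<Longrightarrow> lk (sq_norm_poly n ^ k) (\<beta> + \<beta>) \<ge> 1"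
proof (induction k arbitrary: \<beta>)
  case 0
  then have "\<beta> = 0" using mdeg_0_iff by auto
  then show ?case by simp
next
  case (Suc k)
  then have "\<beta> \<noteq> 0" by auto
  then obtain i where i: "i \<in> Poly_Mapping.keys \<beta>" by fastforce
  define \<beta>' where "\<beta>' = \<beta> - Poly_Mapping.single i 1"
  have b: "\<beta> = Poly_Mapping.single i 1 + \<beta>'" "Poly_Mapping.keys \<beta>' \<subseteq> Poly_Mapping.keys \<beta>"
    using monom_split[OF i] unfolding \<beta>'_def by auto
  have "mdeg \<beta>' = k" using Suc.prems(1) b(1) mdeg_add[of "Poly_Mapping.single i 1" \<beta>'] by simp
  then have IH: "lk (sq_norm_poly n ^ k) (\<beta>' + \<beta>') \<ge> 1" using Suc.IH b(2) Suc.prems(2) by blast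
  have iin: "i \<in> {..<n}" using i Suc.prems(2) by blast
  let ?P = "sq_norm_poly n ^ k"
  have "lk (sq_norm_poly n ^ Suc k) (\<beta> + \<beta>) = (\<Sum>j<n. lk (var j * var j * ?P) (\<beta> + \<beta>))"
    by (simp add: sq_norm_poly_def sum_distrib_right lookup_sum)
  also have "\<dots> \<ge> lk (var i * var i * ?P) (\<beta> + \<beta>)"
  proof (intro member_le_sum)
    fix j assume "j \<in> {..<n} - {i}"
    then have "good n (var j * var j * ?P)" unfolding var_sq
      by (intro good_mult good_pow good_single) auto
    then show "0 \<le> lk (var j * var j * ?P) (\<beta> + \<beta>)" by (simp add: good_def)
  qed (use iin in auto)
  moreover have "lk (var i * var i * ?P) (\<beta> + \<beta>) = lk ?P (\<beta>' + \<beta>')"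
  proof -
    have "\<beta> + \<beta> = (Poly_Mapping.single i 1 + Poly_Mapping.single i 1) + (\<beta>' + \<beta>')"
      using b(1) by (simp add: ac_simps)
    then show ?thesis unfolding var_sq by (simp add: lookup_single_mult)
  qed
  ultimately show ?case using IH by linarith
qed


lemma Qmod_mult: assumes "q \<in> Qmod n r g l0" "s \<in> SOS n" "tdeg s + l0 \<le> l"
  shows "s * q \<in> Qmod n r g l"
proof -
  obtain s0 ss where h: "s0 \<in> SOS n" "tdeg s0 \<le> l0" "\<forall>i\<in>{1..r}. ss i \<in> SOS n \<and> tdeg (ss i * g i) \<le> l0"
    "q = s0 + (\<Sum>i=1..r. ss i * g i)"
    using assms(1) unfolding Qmod_def by blast
  have e: "s * q = s * s0 + (\<Sum>i=1..r. (s * ss i) * g i)"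
    unfolding h(4) by (simp add: distrib_left sum_distrib_left mult.assoc)
  have f: "s * s0 \<in> SOS n" "tdeg (s * s0) \<le> l"
    using SOS_mult[OF assms(2) h(1)] tdeg_mult[of s s0] h(2) assms(3) by auto
  have k: "\<forall>i\<in>{1..r}. s * ss i \<in> SOS n \<and> tdeg (s * ss i * g i) \<le> l"
  proof
    fix i assume i: "i \<in> {1..r}"
    have "tdeg (ss i * g i) \<le> l0" "ss i \<in> SOS n" using h(3) i by auto
    then show "s * ss i \<in> SOS n \<and> tdeg (s * ss i * g i) \<le> l"
      using SOS_mult[OF assms(2)] tdeg_mult[of s "ss i * g i"] assms(3)
      by (auto simp: mult.assoc)
  qed
  show ?thesis unfolding Qmod_def
    by (rule CollectI, rule exI[of _ "s * s0"], rule exI[of _ "\<lambda>i. s * ss i"]) (intro conjI f k e)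
qed

lemma chain:
  assumes L: "L \<in> Lset1 n r g l"
    and arch: "const (r0\<^sup>2) - sq_norm_poly n \<in> Qmod n r g l0"
    and deg: "2 * t + l0 \<le> l + 2" and k: "k \<le> t"
  shows "apply_lf L (sq_norm_poly n ^ k) \<le> r0 ^ (2 * k)"
  using k
proof (induction k)
  case 0
  then show ?case using L by (simp add: Lset1_def)
next
  case (Suc k)
  let ?P = "sq_norm_poly n ^ k"
  have "?P * (const (r0\<^sup>2) - sq_norm_poly n) \<in> Qmod n r g l"
    using Qmod_mult[OF arch good_SOS[OF good_pow]] tdeg_pow[of n k] deg Suc.prems by force
  moreover have "tdeg (?P * (const (r0\<^sup>2) - sq_norm_poly n)) \<le> l \<or> True" by simp
  ultimately have "apply_lf L (?P * (const (r0\<^sup>2) - sq_norm_poly n)) \<ge> 0"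
    using L unfolding Lset1_def by blast
  moreover have "?P * (const (r0\<^sup>2) - sq_norm_poly n) = ?P * const (r0\<^sup>2) - sq_norm_poly n ^ Suc k"
    by (simp add: algebra_simps)
  ultimately have "apply_lf L (sq_norm_poly n ^ Suc k) \<le> r0\<^sup>2 * apply_lf L ?P"
    by (simp add: apply_lf_diff apply_lf_mult_const)
  also have "\<dots> \<le> r0\<^sup>2 * r0 ^ (2 * k)" using Suc by (intro mult_left_mono) auto
  finally show ?case by (simp add: power_add power_mult power2_eq_square mult.assoc)
qed

lemma quad_disc: fixes a b c :: real
  assumes "\<forall>x. a * x\<^sup>2 + 2 * b * x + c \<ge> 0" "a \<ge> 0"
  shows "b\<^sup>2 \<le> a * c"
proof (cases "a = 0")
  case True
  show ?thesis
  proof (rule ccontr)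
    assume "\<not> ?thesis"
    then have "b \<noteq> 0" using True by simp
    then have "2 * b * (- (c + 1) / (2 * b)) + c = -1" by (simp add: field_simps)
    then show False using assms(1)[rule_format, of "- (c + 1) / (2 * b)"] True by simp
  qed
next
  case False
  then have a: "a > 0" using assms(2) by simp
  have "a * (- b / a)\<^sup>2 + 2 * b * (- b / a) + c = c - b\<^sup>2 / a"
    using a by (simp add: field_simps power2_eq_square)
  then have "c - b\<^sup>2 / a \<ge> 0" using assms(1)[rule_format, of "- b / a"] by simp
  then show ?thesis using a by (simp add: field_simps)
qed

lemma CS:
  assumes L: "L \<in> Lset1 n r g l" and b: "\<beta> \<in> mons n t" and c: "\<gamma> \<in> mons n t" and deg: "2 * t \<le> l"
  shows "(L (\<beta> + \<gamma>))\<^sup>2 \<le> L (\<beta> + \<beta>) * L (\<gamma> + \<gamma>)" "L (\<beta> + \<beta>) \<ge> 0"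
proof -
  have quad: "x\<^sup>2 * L (\<beta> + \<beta>) + 2 * x * L (\<beta> + \<gamma>) + L (\<gamma> + \<gamma>) \<ge> 0" for x
  proof -
    let ?q = "Poly_Mapping.single \<beta> x + Poly_Mapping.single \<gamma> 1 :: mpoly"
    have iv: "in_vars n ?q" using b c unfolding mons_def by (intro in_vars_add in_vars_single) auto
    have "tdeg ?q \<le> t" using b c tdeg_add[of "Poly_Mapping.single \<beta> x" "Poly_Mapping.single \<gamma> 1"]
      tdeg_single[of \<beta> x] tdeg_single[of \<gamma> 1] unfolding mons_def by auto
    then have "tdeg (?q * ?q) \<le> l" using tdeg_mult[of ?q ?q] deg by linarith
    then have "apply_lf L (?q * ?q) \<ge> 0" using Lset_nonneg[OF L SOS_sq[OF iv]] by blast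
    moreover have "?q * ?q = Poly_Mapping.single (\<beta> + \<beta>) (x * x) + Poly_Mapping.single (\<beta> + \<gamma>) x
       + Poly_Mapping.single (\<beta> + \<gamma>) x + Poly_Mapping.single (\<gamma> + \<gamma>) 1"
      by (simp add: algebra_simps mult_single)
    ultimately have "apply_lf L (Poly_Mapping.single (\<beta> + \<beta>) (x * x) + Poly_Mapping.single (\<beta> + \<gamma>) x
       + Poly_Mapping.single (\<beta> + \<gamma>) x + Poly_Mapping.single (\<gamma> + \<gamma>) 1) \<ge> 0" by metis
    then show ?thesis unfolding apply_lf_add apply_lf_single by (simp add: power2_eq_square algebra_simps)
  qed
  have a0: "L (\<beta> + \<beta>) \<ge> 0"
  proof -
    let ?q = "Poly_Mapping.single \<beta> 1 :: mpoly"
    have iv: "in_vars n ?q" using b unfolding mons_def by (intro in_vars_single) auto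
    have "tdeg ?q \<le> t" using b tdeg_single[of \<beta> 1] unfolding mons_def by auto
    then have "tdeg (?q * ?q) \<le> l" using tdeg_mult[of ?q ?q] deg by linarith
    then have "apply_lf L (?q * ?q) \<ge> 0" using Lset_nonneg[OF L SOS_sq[OF iv]] by blast
    then show ?thesis by (simp add: mult_single apply_lf_single)
  qed
  show "L (\<beta> + \<beta>) \<ge> 0" by (rule a0)
  show "(L (\<beta> + \<gamma>))\<^sup>2 \<le> L (\<beta> + \<beta>) * L (\<gamma> + \<gamma>)"
  proof (rule quad_disc[OF _ a0], rule allI)
    fix x show "0 \<le> L (\<beta> + \<beta>) * x\<^sup>2 + 2 * L (\<beta> + \<gamma>) * x + L (\<gamma> + \<gamma>)"
      using quad[of x] by (simp add: algebra_simps)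
  qed
qed


lemma monom_split_deg: "mdeg (\<alpha>::monom) \<le> a + b \<Longrightarrow> \<exists>\<beta> \<gamma>. \<alpha> = \<beta> + \<gamma> \<and> mdeg \<beta> \<le> a \<and> mdeg \<gamma> \<le> b \<and>
   Poly_Mapping.keys \<beta> \<subseteq> Poly_Mapping.keys \<alpha> \<and> Poly_Mapping.keys \<gamma> \<subseteq> Poly_Mapping.keys \<alpha>"
proof (induction a arbitrary: \<alpha>)
  case 0
  then show ?case by (intro exI[of _ 0] exI[of _ \<alpha>]) auto
next
  case (Suc a)
  show ?case
  proof (cases "mdeg \<alpha> \<le> a + b")
    case True
    then show ?thesis using Suc.IH by (meson le_SucI)
  next
    case False
    then have "\<alpha> \<noteq> 0" by auto
    then obtain i where i: "i \<in> Poly_Mapping.keys \<alpha>" by fastforce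
    define \<alpha>' where "\<alpha>' = \<alpha> - Poly_Mapping.single i 1"
    have b: "\<alpha> = Poly_Mapping.single i 1 + \<alpha>'" "Poly_Mapping.keys \<alpha>' \<subseteq> Poly_Mapping.keys \<alpha>"
      using monom_split[OF i] unfolding \<alpha>'_def by auto
    have "mdeg \<alpha>' \<le> a + b" using Suc.prems b(1) mdeg_add[of "Poly_Mapping.single i 1" \<alpha>'] by simp
    then obtain \<beta> \<gamma> where h: "\<alpha>' = \<beta> + \<gamma>" "mdeg \<beta> \<le> a" "mdeg \<gamma> \<le> b"
      "Poly_Mapping.keys \<beta> \<subseteq> Poly_Mapping.keys \<alpha>'" "Poly_Mapping.keys \<gamma> \<subseteq> Poly_Mapping.keys \<alpha>'"
      using Suc.IH by blast
    have 1: "\<alpha> = (Poly_Mapping.single i (1::nat) + \<beta>) + \<gamma>" using b h by (simp add: ac_simps)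
    have 2: "mdeg (Poly_Mapping.single i (1::nat) + \<beta>) \<le> Suc a" using h by (simp add: mdeg_add)
    have 3: "Poly_Mapping.keys (Poly_Mapping.single i (1::nat) + \<beta>) \<subseteq> Poly_Mapping.keys \<alpha>"
        using keys_add[of "Poly_Mapping.single i (1::nat)" \<beta>] i h b by auto
    have 4: "Poly_Mapping.keys \<gamma> \<subseteq> Poly_Mapping.keys \<alpha>" using h b by auto
    show ?thesis using 1 2 3 4 h(3) by blast
  qed
qed

lemma finite_mons: "finite (mons n d)"
proof -
  have "inj_on (\<lambda>\<alpha>. restrict (Poly_Mapping.lookup \<alpha>) {..<n}) (mons n d)"
  proof (rule inj_onI)
    fix x y assume x: "x \<in> mons n d" and y: "y \<in> mons n d"
      and e: "restrict (Poly_Mapping.lookup x) {..<n} = restrict (Poly_Mapping.lookup y) {..<n}"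
    show "x = y"
    proof (rule poly_mapping_eqI)
      fix k show "Poly_Mapping.lookup x k = Poly_Mapping.lookup y k"
      proof (cases "k < n")
        case True then show ?thesis using fun_cong[OF e, of k] by simp
      next
        case False
        then have "k \<notin> Poly_Mapping.keys x" "k \<notin> Poly_Mapping.keys y" using x y unfolding mons_def by auto
        then show ?thesis by (simp add: in_keys_iff)
      qed
    qed
  qed
  moreover have "(\<lambda>\<alpha>. restrict (Poly_Mapping.lookup \<alpha>) {..<n}) ` mons n d \<subseteq> PiE {..<n} (\<lambda>_. {..d})"
  proof
    fix x assume "x \<in> (\<lambda>\<alpha>. restrict (Poly_Mapping.lookup \<alpha>) {..<n}) ` mons n d"
    then obtain \<alpha> where a: "\<alpha> \<in> mons n d" "x = restrict (Poly_Mapping.lookup \<alpha>) {..<n}" by blast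
    have "\<And>i. Poly_Mapping.lookup \<alpha> i \<le> d" using a(1) lookup_le_mdeg[of \<alpha>] unfolding mons_def
      using le_trans by blast
    then show "x \<in> PiE {..<n} (\<lambda>_. {..d})" using a(2) by (simp add: PiE_iff)
  qed
  moreover have "finite (PiE {..<n} (\<lambda>_. {..d::nat}))" by (intro finite_PiE) auto
  ultimately show ?thesis by (meson finite_imageD finite_subset)
qed

lemma dbl_single_eq: "(Poly_Mapping.single j (1::nat) + Poly_Mapping.single j 1 = Poly_Mapping.single i 1 + Poly_Mapping.single i 1) \<longleftrightarrow> j = i"
proof
  assume "Poly_Mapping.single j (1::nat) + Poly_Mapping.single j 1 = Poly_Mapping.single i 1 + Poly_Mapping.single i 1"
  then have "Poly_Mapping.lookup (Poly_Mapping.single j (1::nat) + Poly_Mapping.single j 1) i = Poly_Mapping.lookup (Poly_Mapping.single i 1 + Poly_Mapping.single i 1) i"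
    by simp
  then show "j = i" by (simp add: lookup_add lookup_single when_def split: if_splits)
qed simp

lemma l0_ge2: assumes "n \<ge> 1" and arch: "const c - sq_norm_poly n \<in> Qmod n r g l0"
  shows "l0 \<ge> 2"
proof (rule ccontr)
  assume "\<not> l0 \<ge> 2"
  obtain s0 ss where h: "tdeg s0 \<le> l0" "\<forall>i\<in>{1..r}. tdeg (ss i * g i) \<le> l0"
    "const c - sq_norm_poly n = s0 + (\<Sum>i=1..r. ss i * g i)"
    using arch unfolding Qmod_def by blast
  have "tdeg (s0 + (\<Sum>i=1..r. ss i * g i)) \<le> l0"
    using tdeg_add[of s0 "\<Sum>i=1..r. ss i * g i"] tdeg_sum[of "{1..r}" "\<lambda>i. ss i * g i" l0] h by auto
  then have td: "tdeg (const c - sq_norm_poly n) \<le> 1" using h(3) \<open>\<not> l0 \<ge> 2\<close> by simp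
  define i0 where "i0 = (0::nat)"
  have i0: "i0 < n" using assms(1) i0_def by simp
  define m where "m = Poly_Mapping.single i0 (1::nat) + Poly_Mapping.single i0 1"
  have md: "mdeg m = 2" unfolding m_def by (simp add: mdeg_add)
  then have "m \<noteq> 0" by auto
  have "lk (sq_norm_poly n) m = (\<Sum>j<n. (if j = i0 then 1 else 0))"
    unfolding sq_norm_poly_def var_sq lookup_sum
  proof (intro sum.cong refl)
    fix j
    show "lk (Poly_Mapping.single (Poly_Mapping.single j 1 + Poly_Mapping.single j 1) 1) m = (if j = i0 then 1 else 0)"
      unfolding m_def lookup_single when_def dbl_single_eq by simp
  qed
  also have "\<dots> = 1" using i0 by (simp add: sum.delta)
  finally have "lk (const c - sq_norm_poly n) m = -1"
    using \<open>m \<noteq> 0\<close> by (simp add: lookup_minus const_def lookup_single when_def)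
  then have "m \<in> ks (const c - sq_norm_poly n)" by (simp add: in_keys_iff)
  then have "mdeg m \<le> tdeg (const c - sq_norm_poly n)" by (rule in_keys_tdeg)
  then have "mdeg m \<le> 1" using td by linarith
  then show False using md by simp
qed


lemma dbl_inj: "(\<beta>::monom) + \<beta> = \<gamma> + \<gamma> \<Longrightarrow> \<beta> = \<gamma>"
proof (rule poly_mapping_eqI)
  fix k assume "\<beta> + \<beta> = \<gamma> + \<gamma>"
  then have "Poly_Mapping.lookup (\<beta> + \<beta>) k = Poly_Mapping.lookup (\<gamma> + \<gamma>) k" by simp
  then show "Poly_Mapping.lookup \<beta> k = Poly_Mapping.lookup \<gamma> k" by (simp add: lookup_add)
qed

lemma good_ST: "good n ((\<Sum>k\<in>{0..t}. sq_norm_poly n ^ k) - (\<Sum>\<beta>\<in>mons n t. Poly_Mapping.single (\<beta> + \<beta>) 1))"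
  unfolding good_def
proof (intro allI)
  fix m
  define A where "A = (\<Sum>k\<in>{0..t}. lk (sq_norm_poly n ^ k) m)"
  define B where "B = (\<Sum>\<beta>\<in>mons n t. (if \<beta> + \<beta> = m then 1 else 0::real))"
  have lk: "lk ((\<Sum>k\<in>{0..t}. sq_norm_poly n ^ k) - (\<Sum>\<beta>\<in>mons n t. Poly_Mapping.single (\<beta> + \<beta>) 1)) m = A - B"
    unfolding A_def B_def by (simp add: lookup_minus lookup_sum lookup_single when_def)
  have Ann: "A \<ge> 0" unfolding A_def using good_pow[of n] by (intro sum_nonneg) (auto simp: good_def)
  have Anz: "\<exists>\<gamma>. Poly_Mapping.keys \<gamma> \<subseteq> {..<n} \<and> m = \<gamma> + \<gamma>" if "A \<noteq> 0"
  proof -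
    obtain k where "lk (sq_norm_poly n ^ k) m \<noteq> 0" using \<open>A \<noteq> 0\<close> unfolding A_def
      by (meson sum.not_neutral_contains_not_neutral)
    then show ?thesis using good_pow[of n k] unfolding good_def by blast
  qed
  show "0 \<le> lk ((\<Sum>k\<in>{0..t}. sq_norm_poly n ^ k) - (\<Sum>\<beta>\<in>mons n t. Poly_Mapping.single (\<beta> + \<beta>) 1)) m \<and>
         (lk ((\<Sum>k\<in>{0..t}. sq_norm_poly n ^ k) - (\<Sum>\<beta>\<in>mons n t. Poly_Mapping.single (\<beta> + \<beta>) 1)) m \<noteq> 0 \<longrightarrow>
          (\<exists>\<gamma>. Poly_Mapping.keys \<gamma> \<subseteq> {..<n} \<and> m = \<gamma> + \<gamma>))"
    unfolding lk
  proof -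
  show "0 \<le> A - B \<and> (A - B \<noteq> 0 \<longrightarrow> (\<exists>\<gamma>. Poly_Mapping.keys \<gamma> \<subseteq> {..<n} \<and> m = \<gamma> + \<gamma>))"
  proof (cases "\<exists>\<beta>0\<in>mons n t. m = \<beta>0 + \<beta>0")
    case True
    then obtain \<beta>0 where b0: "\<beta>0 \<in> mons n t" "m = \<beta>0 + \<beta>0" by blast
    have "B = (\<Sum>\<beta>\<in>mons n t. (if \<beta> = \<beta>0 then 1 else 0::real))"
      unfolding B_def
    proof (intro sum.cong refl)
      fix \<beta> show "(if \<beta> + \<beta> = m then 1 else 0::real) = (if \<beta> = \<beta>0 then 1 else 0)"
        using dbl_inj[of \<beta> \<beta>0] b0(2) by (cases "\<beta> = \<beta>0") auto
    qed
    also have "\<dots> = 1" using b0(1) finite_mons by simp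
    finally have B1: "B = 1" .
    have "A \<ge> lk (sq_norm_poly n ^ mdeg \<beta>0) m" unfolding A_def
    proof (rule member_le_sum)
      show "mdeg \<beta>0 \<in> {0..t}" using b0(1) unfolding mons_def by auto
    qed (use good_pow[of n] in \<open>auto simp: good_def\<close>)
    moreover have "lk (sq_norm_poly n ^ mdeg \<beta>0) m \<ge> 1"
      using pow_lookup_ge1[of \<beta>0 "mdeg \<beta>0" n] b0 unfolding mons_def by auto
    ultimately show ?thesis using B1 b0 unfolding mons_def by auto
  next
    case False
    then have "B = 0" unfolding B_def by (intro sum.neutral) auto
    then show ?thesis using Ann Anz by auto
  qed
  qed
qed

lemma tdeg_ST: "tdeg ((\<Sum>k\<in>{0..t}. sq_norm_poly n ^ k) - (\<Sum>\<beta>\<in>mons n t. Poly_Mapping.single (\<beta> + \<beta>) 1)) \<le> 2 * t"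
proof -
  have "tdeg (\<Sum>k\<in>{0..t}. sq_norm_poly n ^ k) \<le> 2 * t"
  proof (rule tdeg_sum)
    fix k assume "k \<in> {0..t}"
    then have "2 * k \<le> 2 * t" by simp
    then show "tdeg (sq_norm_poly n ^ k) \<le> 2 * t" using tdeg_pow[of n k] by linarith
  qed
  moreover have "tdeg (\<Sum>\<beta>\<in>mons n t. Poly_Mapping.single (\<beta> + \<beta>) (1::real)) \<le> 2 * t"
  proof (rule tdeg_sum)
    fix \<beta> assume "\<beta> \<in> mons n t"
    then show "tdeg (Poly_Mapping.single (\<beta> + \<beta>) (1::real)) \<le> 2 * t"
      using tdeg_single[of "\<beta> + \<beta>" 1] unfolding mons_def by (simp add: mdeg_add)
  qed
  ultimately show ?thesis
    using tdeg_diff[of "\<Sum>k\<in>{0..t}. sq_norm_poly n ^ k" "\<Sum>\<beta>\<in>mons n t. Poly_Mapping.single (\<beta> + \<beta>) (1::real)"]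
    by linarith
qed


lemma main_bound:
  assumes r0_pos: "r0 > 0"
    and arch: "const (r0\<^sup>2) - sq_norm_poly n \<in> Qmod n r g l0"
    and deg: "int l \<ge> 2 * int t - 2 + int l0"
    and L: "L \<in> Lset1 n r g l"
  shows "trunc_norm n (2 * t) L \<le> (\<Sum>k=0..t. r0 ^ (2 * k))"
proof -
  let ?R = "\<Sum>k=0..t. r0 ^ (2 * k)"
  have L1: "L 0 = 1" using L unfolding Lset1_def by (simp add: apply_lf_def)
  have R1: "?R \<ge> 1"
  proof -
    have "r0 ^ (2 * 0) \<le> ?R" by (rule member_le_sum) (use r0_pos in auto)
    then show ?thesis by simp
  qed
  show ?thesis
  proof (cases "n = 0")
    case True
    have "mons n (2 * t) = {0}" unfolding mons_def True by auto
    then show ?thesis using L1 R1 by (simp add: trunc_norm_def)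
  next
    case False
    then have l02: "l0 \<ge> 2" using l0_ge2[OF _ arch] by simp
    then have d1: "2 * t \<le> l" and d2: "2 * t + l0 \<le> l + 2" using deg by linarith+
    define M where "M = mons n t"
    have fM: "finite M" unfolding M_def by (rule finite_mons)
    have ex: "\<exists>p. p \<in> M \<times> M \<and> fst p + snd p = \<alpha>" if "\<alpha> \<in> mons n (2 * t)" for \<alpha>
    proof -
      have "mdeg \<alpha> \<le> t + t" using that unfolding mons_def by simp
      then obtain \<beta> \<gamma> where h: "\<alpha> = \<beta> + \<gamma>" "mdeg \<beta> \<le> t" "mdeg \<gamma> \<le> t"
        "Poly_Mapping.keys \<beta> \<subseteq> Poly_Mapping.keys \<alpha>" "Poly_Mapping.keys \<gamma> \<subseteq> Poly_Mapping.keys \<alpha>"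
        using monom_split_deg[of \<alpha> t t] by blast
      then have "(\<beta>, \<gamma>) \<in> M \<times> M" using that unfolding M_def mons_def by auto
      then show ?thesis using h(1) by (intro exI[of _ "(\<beta>, \<gamma>)"]) auto
    qed
    define sp where "sp \<alpha> = (SOME p. p \<in> M \<times> M \<and> fst p + snd p = \<alpha>)" for \<alpha>
    have sp: "sp \<alpha> \<in> M \<times> M" "fst (sp \<alpha>) + snd (sp \<alpha>) = \<alpha>" if "\<alpha> \<in> mons n (2 * t)" for \<alpha>
      using someI_ex[OF ex[OF that]] unfolding sp_def by auto
    have inj: "inj_on sp (mons n (2 * t))"
      by (rule inj_onI) (metis sp(2))
    define T where "T = (\<Sum>\<beta>\<in>M. L (\<beta> + \<beta>))"
    have T0: "T \<ge> 0" unfolding T_def using CS(2)[OF L _ _ d1] by (intro sum_nonneg) (auto simp: M_def)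
    have "(\<Sum>\<alpha>\<in>mons n (2 * t). (L \<alpha>)\<^sup>2) = (\<Sum>\<alpha>\<in>mons n (2 * t). (L (fst (sp \<alpha>) + snd (sp \<alpha>)))\<^sup>2)"
      using sp(2) by simp
    also have "\<dots> = (\<Sum>p\<in>sp ` mons n (2 * t). (L (fst p + snd p))\<^sup>2)"
      using sum.reindex[OF inj, of "\<lambda>p. (L (fst p + snd p))\<^sup>2"] by simp
    also have "\<dots> \<le> (\<Sum>p\<in>M \<times> M. (L (fst p + snd p))\<^sup>2)"
    proof (rule sum_mono2)
      show "sp ` mons n (2 * t) \<subseteq> M \<times> M" using sp(1) by (simp add: image_subset_iff)
    qed (use fM in auto)
    also have "\<dots> \<le> (\<Sum>p\<in>M \<times> M. L (fst p + fst p) * L (snd p + snd p))"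
      by (rule sum_mono) (use CS(1)[OF L _ _ d1] in \<open>auto simp: M_def\<close>)
    also have "\<dots> = T * T"
      unfolding T_def sum_product sum.cartesian_product by (simp add: case_prod_beta)
    finally have S: "(\<Sum>\<alpha>\<in>mons n (2 * t). (L \<alpha>)\<^sup>2) \<le> T\<^sup>2" by (simp add: power2_eq_square)
    define Sp where "Sp = (\<Sum>k\<in>{0..t}. sq_norm_poly n ^ k)"
    define Tp where "Tp = (\<Sum>\<beta>\<in>mons n t. Poly_Mapping.single (\<beta> + \<beta>) (1::real))"
    have "apply_lf L (Sp - Tp) \<ge> 0"
      using Lset_nonneg[OF L good_SOS[OF good_ST] order_trans[OF tdeg_ST d1]] unfolding Sp_def Tp_def .
    moreover have "apply_lf L Tp = T" unfolding Tp_def T_def M_def by (simp add: apply_lf_sum apply_lf_single)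
    moreover have "apply_lf L Sp \<le> ?R" unfolding Sp_def apply_lf_sum
      by (rule sum_mono) (use chain[OF L arch d2] in auto)
    ultimately have TR: "T \<le> ?R" by (simp add: apply_lf_diff)
    have "trunc_norm n (2 * t) L \<le> sqrt (T\<^sup>2)" unfolding trunc_norm_def using S by (rule real_sqrt_le_mono)
    also have "\<dots> = T" using T0 by simp
    finally show ?thesis using TR by simp
  qed
qed

theorem mainTheorem16:
  fixes n r l0 :: nat and g :: "nat \<Rightarrow> mpoly" and r0 :: real
  assumes g_vars: "\<forall>i\<in>{1..r}. in_vars n (g i)"
    and r0_pos: "r0 > 0"
    and arch: "const (r0\<^sup>2) - sq_norm_poly n \<in> Qmod n r g l0"
  shows "\<forall>t l. int l \<ge> 2 * int t - 2 + int l0 \<longrightarrow>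
           (\<forall>L\<in>Lset1 n r g l.
              trunc_norm n (2 * t) L \<le> sqrt (real ((n + t) choose t)) * (\<Sum>k=0..t. r0 ^ (2 * k)))"
proof (intro allI impI ballI)
  fix t l L assume deg: "int l \<ge> 2 * int t - 2 + int l0" and L: "L \<in> Lset1 n r g l"
  have b: "trunc_norm n (2 * t) L \<le> (\<Sum>k=0..t. r0 ^ (2 * k))" by (rule main_bound[OF r0_pos arch deg L])
  have "real ((n + t) choose t) \<ge> 1" by (simp add: Suc_leI)
  then have "sqrt (real ((n + t) choose t)) \<ge> 1" by simp
  moreover have "(\<Sum>k=0..t. r0 ^ (2 * k)) \<ge> 0" using r0_pos by (intro sum_nonneg) auto
  ultimately have "(\<Sum>k=0..t. r0 ^ (2 * k)) \<le> sqrt (real ((n + t) choose t)) * (\<Sum>k=0..t. r0 ^ (2 * k))"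
    by (metis mult_le_cancel_right1 less_le_not_le)
  then show "trunc_norm n (2 * t) L \<le> sqrt (real ((n + t) choose t)) * (\<Sum>k=0..t. r0 ^ (2 * k))"
    using b by linarith
qed

end
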